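(* Let $n\ge 0$ and let $L$ be one of the divisor classes $2f_{\mathrm{cl}}$, $h+2f_{\mathrm{cl}}$ or $h+(n+2)f_{\mathrm{cl}}$ on $\mathbb F_n$. Let $\phi\in H^0(\mathbb F_n,\mathcal O(4L))$ and $\gamma\in H^0(\mathbb F_n,\mathcal O(6L))$. If a point $x\in\mathbb F_n$ satisfies $\operatorname{ord}_x(\phi)\ge 8$ and $\operatorname{ord}_x(\gamma)\ge 12$, then there is an irreducible curve $C\ni x$ with $\operatorname{ord}_C(\phi)\ge 4$ and $\operatorname{ord}_C(\gamma)\ge 6$.
   Context: $h$ is the class of the section of $\mathbb F_n$ of self-intersection $-n$ and $f_{\mathrm{cl}}$ the fiber class; $h+nf_{\mathrm{cl}}$ is the class of the section of self-intersection $+n$. $\operatorname{ord}_x$ is the multiplicity of a section at the point $x$, $\operatorname{ord}_C$ the vanishing order along the curve $C$ (with the convention that the zero section has infinite order). *)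

theory Defs
  imports "HOL-Computational_Algebra.Computational_Algebra"
begin

text \<open>
  Cox-ring model of the Hirzebruch surface F_n over the complex numbers.
  The Cox ring is C[t0,t1,x,y], represented as the nested polynomial type
  complex poly poly poly poly: the outermost variable is y, then x, then t1,
  and the innermost variable is t0.  Grading: t0, t1 have class f, x has
  class h (the (-n)-section), y has class h + n f.  Hence the monomial
  t0^a t1^b x^c y^d has class (c+d) h + (a+b+n d) f.
  Global sections of O(A h + B f) are exactly the Cox-ring elements that are
  homogeneous of class (A,B).
\<close>

type_synonym cox = "complex poly poly poly poly"

definition cox_coeff :: "cox \<Rightarrow> nat \<Rightarrow> nat \<Rightarrow> nat \<Rightarrow> nat \<Rightarrow> complex" where
  "cox_coeff g a b c d = coeff (coeff (coeff (coeff g d) c) b) a"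
  \<comment> \<open>coefficient of t0^a t1^b x^c y^d\<close>

definition cox_homogeneous :: "nat \<Rightarrow> nat \<Rightarrow> nat \<Rightarrow> cox \<Rightarrow> bool" where
  "cox_homogeneous n A B g \<longleftrightarrow>
     (\<forall>a b c d. cox_coeff g a b c d \<noteq> 0 \<longrightarrow> c + d = A \<and> a + b + n * d = B)"

definition cox_eval :: "cox \<Rightarrow> complex \<times> complex \<times> complex \<times> complex \<Rightarrow> complex" where
  "cox_eval g p = (case p of (t0, t1, x, y) \<Rightarrow>
     poly (poly (poly (poly g [:[:[:y:]:]:]) [:[:x:]:]) [:t1:]) t0)"

text \<open>Points of F_n: (t0,t1,x,y) with (t0,t1) \<noteq> 0 and (x,y) \<noteq> 0,
  modulo the free (C^*)^2-action.\<close>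
definition hirz_point :: "complex \<times> complex \<times> complex \<times> complex \<Rightarrow> bool" where
  "hirz_point p = (case p of (t0, t1, x, y) \<Rightarrow> (t0, t1) \<noteq> (0, 0) \<and> (x, y) \<noteq> (0, 0))"

definition D_y :: "cox \<Rightarrow> cox" where "D_y = pderiv"
definition D_x :: "cox \<Rightarrow> cox" where "D_x = map_poly pderiv"
definition D_t1 :: "cox \<Rightarrow> cox" where "D_t1 = map_poly (map_poly pderiv)"
definition D_t0 :: "cox \<Rightarrow> cox" where "D_t0 = map_poly (map_poly (map_poly pderiv))"

definition cox_partial :: "nat \<Rightarrow> nat \<Rightarrow> nat \<Rightarrow> nat \<Rightarrow> cox \<Rightarrow> cox" where
  "cox_partial i j k l g = (D_t0 ^^ i) ((D_t1 ^^ j) ((D_x ^^ k) ((D_y ^^ l) g)))"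

text \<open>ord_x(g) \<ge> m at the point of F_n represented by p.  Since the quotient
  map from the open subset of C^4 to F_n is a principal (C^*)^2-bundle, the
  multiplicity of the section at x equals the multiplicity at p of the Cox
  polynomial, i.e. all partial derivatives of total order < m vanish at p.\<close>
definition ord_pt_ge :: "cox \<Rightarrow> complex \<times> complex \<times> complex \<times> complex \<Rightarrow> nat \<Rightarrow> bool" where
  "ord_pt_ge g p m \<longleftrightarrow>
     (\<forall>i j k l. i + j + k + l < m \<longrightarrow> cox_eval (cox_partial i j k l g) p = 0)"

text \<open>Irreducible curves in F_n correspond to irreducible homogeneous elements
  of the Cox ring (up to scalars); the vanishing order of a section along the
  curve {c = 0} is the exponent of c in the section (infinite for 0).\<close>
definition ord_curve_ge :: "cox \<Rightarrow> cox \<Rightarrow> nat \<Rightarrow> bool" where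
  "ord_curve_ge c g m \<longleftrightarrow> c ^ m dvd g"

definition irreducible_curve :: "nat \<Rightarrow> cox \<Rightarrow> bool" where
  "irreducible_curve n c \<longleftrightarrow> irreducible c \<and> (\<exists>A B. cox_homogeneous n A B c)"

end

theory Submission
  imports Defs
begin

lemma pd_coeff:
  fixes q :: "'a::idom poly"
  shows "coeff ((pderiv ^^ k) q) m = of_nat (pochhammer (Suc m) k) * coeff q (m + k)"
proof (induction k arbitrary: m)
  case 0 then show ?case by simp
next
  case (Suc k)
  have "coeff ((pderiv ^^ Suc k) q) m = of_nat (Suc m) * coeff ((pderiv ^^ k) q) (Suc m)"
    by (simp add: coeff_pderiv)
  also have "\<dots> = of_nat (Suc m) * (of_nat (pochhammer (Suc (Suc m)) k) * coeff q (Suc m + k))"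
    using Suc by simp
  also have "\<dots> = of_nat (pochhammer (Suc m) (Suc k)) * coeff q (m + Suc k)"
  proof -
    have "pochhammer (Suc m) (Suc k) = Suc m * pochhammer (Suc (Suc m)) k" by (simp add: pochhammer_rec)
    then show ?thesis by (simp only: of_nat_mult mult.assoc add_Suc_right add_Suc)
  qed
  finally show ?case .
qed

lemma pd_funpow_0 [simp]: "(pderiv ^^ k) (0::'a::idom poly) = 0"
  by (induction k) auto

lemma pd_funpow_add: "(pderiv ^^ k) ((p::'a::idom poly) + q) = (pderiv ^^ k) p + (pderiv ^^ k) q"
  by (induction k) (auto simp: pderiv_add)

lemma map_poly_funpow:
  fixes f :: "'a::zero \<Rightarrow> 'a"
  assumes "f 0 = 0"
  shows "(map_poly f ^^ k) p = map_poly (f ^^ k) p"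
proof (induction k)
  case 0 then show ?case by (simp add: funpow_0 map_poly_idI)
next
  case (Suc k)
  have fk: "(f ^^ k) 0 = 0" by (induction k) (auto simp: assms)
  show ?case using Suc by (simp add: map_poly_map_poly assms fk comp_def)
qed

lemma leibniz_lin:
  fixes G L :: "'a::idom poly"
  assumes dL: "pderiv L = 1"
  shows "(pderiv ^^ Suc j) (L * G) = L * (pderiv ^^ Suc j) G + smult (of_nat (Suc j)) ((pderiv ^^ j) G)"
proof (induction j)
  case 0 then show ?case by (simp add: pderiv_mult dL)
next
  case (Suc j)
  have "(pderiv ^^ Suc (Suc j)) (L * G) = pderiv ((pderiv ^^ Suc j) (L * G))"
    by (simp only: funpow.simps(2) o_apply)
  also have "\<dots> = pderiv (L * (pderiv ^^ Suc j) G + smult (of_nat (Suc j)) ((pderiv ^^ j) G))"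
    using Suc by simp
  also have "\<dots> = L * pderiv ((pderiv ^^ Suc j) G) + (pderiv ^^ Suc j) G + smult (of_nat (Suc j)) (pderiv ((pderiv ^^ j) G))"
    by (simp only: pderiv_add pderiv_mult pderiv_smult dL mult_1_right add.commute)
  also have "pderiv ((pderiv ^^ j) G) = (pderiv ^^ Suc j) G" by simp
  also have "pderiv ((pderiv ^^ Suc j) G) = (pderiv ^^ Suc (Suc j)) G" by (simp only: funpow.simps(2) o_apply)
  also have "L * (pderiv ^^ Suc (Suc j)) G + (pderiv ^^ Suc j) G + smult (of_nat (Suc j)) ((pderiv ^^ Suc j) G)
      = L * (pderiv ^^ Suc (Suc j)) G + smult (of_nat (Suc (Suc j))) ((pderiv ^^ Suc j) G)"
    by (simp only: of_nat_Suc[of "Suc j"] smult_add_left smult_1_left add.assoc add.commute[of "(pderiv ^^ Suc j) G"])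
  finally show ?case .
qed

lemma root_order:
  fixes F :: "'a::{idom,ring_char_0} poly"
  assumes "\<forall>j<m. poly ((pderiv ^^ j) F) c = 0"
  shows "[:-c,1:] ^ m dvd F"
  using assms
proof (induction m arbitrary: F)
  case 0 then show ?case by simp
next
  case (Suc m)
  have "poly F c = 0" using Suc.prems by (metis funpow_0 zero_less_Suc)
  then obtain G where G: "F = [:-c,1:] * G" by (auto simp: poly_eq_0_iff_dvd)
  have "\<forall>j<m. poly ((pderiv ^^ j) G) c = 0"
  proof (intro allI impI)
    fix j assume "j < m"
    then have "Suc j < Suc m" by simp
    then have "poly ((pderiv ^^ Suc j) F) c = 0" using Suc.prems by blast
    moreover have "(pderiv ^^ Suc j) F = [:-c,1:] * (pderiv ^^ Suc j) G + smult (of_nat (Suc j)) ((pderiv ^^ j) G)"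
      unfolding G by (rule leibniz_lin) (simp add: pderiv_pCons)
    ultimately have "of_nat (Suc j) * poly ((pderiv ^^ j) G) c = 0"
      by simp
    then show "poly ((pderiv ^^ j) G) c = 0" by (metis mult_eq_0_iff of_nat_eq_0_iff nat.distinct(1))
  qed
  then have "[:-c,1:] ^ m dvd G" by (rule Suc.IH)
  then show ?case unfolding G by (metis power_Suc mult_dvd_mono dvd_refl)
qed

lemma xpow_dvd:
  fixes q :: "'a::comm_ring_1 poly"
  assumes "\<forall>i<m. coeff q i = 0"
  shows "[:0,1:] ^ m dvd q"
  using assms
proof (induction m arbitrary: q)
  case 0 then show ?case by simp
next
  case (Suc m)
  obtain a q' where q: "q = pCons a q'" by (cases q) auto
  have a: "a = 0" using Suc.prems q by (metis coeff_pCons_0 zero_less_Suc)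
  have "\<forall>i<m. coeff q' i = 0" using Suc.prems q by (metis Suc_mono coeff_pCons_Suc)
  then have "[:0,1:] ^ m dvd q'" by (rule Suc.IH)
  moreover have "q = [:0,1:] * q'" using q a by simp
  ultimately show ?case by (metis power_Suc mult_dvd_mono dvd_refl)
qed

lemma coeff_of_nat_mult: "coeff (of_nat k * (q::'a::comm_semiring_1 poly)) m = of_nat k * coeff q m"
  by (simp add: of_nat_poly)

lemma eval_nested: "poly (poly G q) x = poly (map_poly (\<lambda>a. poly a x) G) (poly q x)"
  by (induction G) (auto simp: map_poly_pCons)

lemma const_poly_pow: "[:a:] ^ n = [:(a::'a::comm_semiring_1) ^ n:]"
  by (induction n) (auto simp: mult.commute)

definition homF :: "complex poly poly \<Rightarrow> nat \<Rightarrow> bool" where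
  "homF F e \<longleftrightarrow> (\<forall>a b. coeff (coeff F b) a \<noteq> 0 \<longrightarrow> a + b = e)"

definition conc :: "complex poly \<Rightarrow> nat \<Rightarrow> bool" where
  "conc q k \<longleftrightarrow> (\<forall>a. coeff q a \<noteq> 0 \<longrightarrow> a = k)"

lemma homF_pderiv: "homF F e \<Longrightarrow> homF (pderiv F) (e - 1)"
  unfolding homF_def
proof (intro allI impI)
  fix a b assume h: "\<forall>a b. coeff (coeff F b) a \<noteq> 0 \<longrightarrow> a + b = e"
    and nz: "coeff (coeff (pderiv F) b) a \<noteq> 0"
  then have "of_nat (Suc b) * coeff (coeff F (Suc b)) a \<noteq> 0"
    by (simp add: coeff_pderiv coeff_of_nat_mult del: of_nat_Suc)
  then have "coeff (coeff F (Suc b)) a \<noteq> 0" by auto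
  with h have "a + Suc b = e" by blast
  then show "a + b = e - 1" by simp
qed

lemma homF_funpow: "homF F e \<Longrightarrow> homF ((pderiv ^^ j) F) (e - j)"
proof (induction j)
  case 0 then show ?case by simp
next
  case (Suc j)
  then have "homF (pderiv ((pderiv ^^ j) F)) (e - j - 1)" by (intro homF_pderiv) auto
  then show ?case by simp
qed

lemma conc_poly_c: "homF F e \<Longrightarrow> conc (poly F [:0, r:]) e"
proof (induction F arbitrary: e)
  case 0 then show ?case by (simp add: conc_def)
next
  case (pCons a F)
  have h: "\<And>a' b. coeff (coeff (pCons a F) b) a' \<noteq> 0 \<Longrightarrow> a' + b = e"
    using pCons.prems unfolding homF_def by blast
  have ha: "conc a e" unfolding conc_def
  proof (intro allI impI)
    fix x assume "coeff a x \<noteq> 0"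
    then show "x = e" using h[where b=0 and a'=x] by simp
  qed
  show ?case
  proof (cases "e = 0")
    case True
    have "F = 0"
    proof (rule poly_eqI)
      fix b show "coeff F b = coeff 0 b"
      proof (rule poly_eqI)
        fix a' show "coeff (coeff F b) a' = coeff (coeff 0 b) a'"
          using h[where a'=a' and b="Suc b"] True by (cases "coeff (coeff F b) a' = 0") auto
      qed
    qed
    then show ?thesis using ha by simp
  next
    case False
    have "homF F (e - 1)" unfolding homF_def
    proof (intro allI impI)
      fix a' b assume "coeff (coeff F b) a' \<noteq> 0"
      then have "a' + Suc b = e" using h[where a'=a' and b="Suc b"] by simp
      then show "a' + b = e - 1" by simp
    qed
    then have IH: "conc (poly F [:0, r:]) (e - 1)" by (rule pCons.IH)
    show ?thesis unfolding conc_def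
    proof (intro allI impI)
      fix a' assume nz: "coeff (poly (pCons a F) [:0, r:]) a' \<noteq> 0"
      show "a' = e"
      proof (cases "coeff a a' = 0")
        case False then show ?thesis using ha by (simp add: conc_def)
      next
        case True
        with nz have "coeff ([:0, r:] * poly F [:0, r:]) a' \<noteq> 0" by simp
        then obtain k where k: "a' = Suc k" "coeff (poly F [:0, r:]) k \<noteq> 0"
          by (cases a') auto
        then have "k = e - 1" using IH by (simp add: conc_def)
        then show ?thesis using k False by simp
      qed
    qed
  qed
qed

lemma conc_zero:
  assumes "conc q k" "poly q x = 0" "x \<noteq> 0"
  shows "q = 0"
proof -
  have q: "q = monom (coeff q k) k"
    by (rule poly_eqI) (use assms(1) in \<open>auto simp: conc_def coeff_monom\<close>)
  then have "coeff q k * x ^ k = 0" using assms(2) by (metis poly_monom)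
  then have "coeff q k = 0" using assms(3) by simp
  then show ?thesis using q by simp
qed

lemma caseA:
  assumes hF: "homF F e" and p0: "p0 \<noteq> 0"
    and ev: "\<forall>j<m. poly (poly ((pderiv ^^ j) F) [:p1:]) p0 = 0"
  shows "[:[:0,p1:],[:-p0:]:] ^ m dvd F"
proof -
  define c where "c = [:0, p1/p0:]"
  have pc: "poly c p0 = p1" using p0 by (simp add: c_def)
  have "\<forall>j<m. poly ((pderiv ^^ j) F) c = 0"
  proof (intro allI impI)
    fix j assume "j < m"
    have cc: "conc (poly ((pderiv ^^ j) F) c) (e - j)"
      unfolding c_def by (rule conc_poly_c, rule homF_funpow, rule hF)
    have "poly (poly ((pderiv ^^ j) F) c) p0 = poly (poly ((pderiv ^^ j) F) [:p1:]) p0"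
      by (simp only: eval_nested pc) simp
    also have "\<dots> = 0" using ev \<open>j < m\<close> by blast
    finally show "poly ((pderiv ^^ j) F) c = 0" using conc_zero[OF cc _ p0] by blast
  qed
  then have d1: "[:-c,1:] ^ m dvd F" by (rule root_order)
  have "[:-c,1:] = smult [:-1/p0:] [:[:0,p1:],[:-p0:]:]"
    using p0 by (simp add: c_def)
  then have "[:[:0,p1:],[:-p0:]:] dvd [:-c,1:]" by (metis dvd_smult dvd_refl)
  then have "[:[:0,p1:],[:-p0:]:] ^ m dvd [:-c,1:] ^ m" by (rule dvd_power_same)
  then show ?thesis using d1 by (rule dvd_trans)
qed

lemma caseB:
  assumes hF: "homF F e" and p1: "p1 \<noteq> 0"
    and ev: "\<forall>i<m. poly (poly (map_poly (pderiv ^^ i) F) [:p1:]) 0 = 0"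
  shows "[:[:0,p1:]:] ^ m dvd F"
proof -
  have z: "coeff (coeff F b) i = 0" if "i < m" for i b
  proof -
    define W where "W = map_poly (\<lambda>a. poly ((pderiv ^^ i) a) 0) F"
    have cW: "coeff W b' = of_nat (pochhammer 1 i) * coeff (coeff F b') i" for b'
      by (simp add: W_def coeff_map_poly poly_0_coeff_0 pd_coeff)
    have pn: "(of_nat (pochhammer 1 i) :: complex) \<noteq> 0"
      by (metis of_nat_eq_0_iff pochhammer_fact fact_nonzero)
    have "conc W (e - i)" unfolding conc_def
    proof (intro allI impI)
      fix b' assume "coeff W b' \<noteq> 0"
      then have "coeff (coeff F b') i \<noteq> 0" by (simp add: cW)
      then have "i + b' = e" using hF by (simp add: homF_def)
      then show "b' = e - i" by simp
    qed
    moreover have "poly W p1 = 0"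
    proof -
      have f0: "(pderiv ^^ i) 0 = (0::complex poly)" by simp
      have "poly (poly (map_poly (pderiv ^^ i) F) [:p1:]) 0 = poly W p1"
        by (simp only: eval_nested) (simp add: W_def map_poly_map_poly comp_def)
      then show ?thesis using ev that by simp
    qed
    ultimately have "W = 0" using conc_zero p1 by blast
    then have "coeff W b = 0" by simp
    then show ?thesis using pn by (simp add: cW)
  qed
  have "\<forall>b. [:0,p1:] ^ m dvd coeff F b"
  proof
    fix b
    have "[:0,1:] ^ m dvd coeff F b" using z by (intro xpow_dvd) auto
    moreover have "[:0,p1:] dvd [:0,(1::complex):]"
    proof -
      have "[:0,(1::complex):] = smult (1/p1) [:0,p1:]" using p1 by simp
      then show ?thesis by (metis dvd_smult dvd_refl)
    qed
    then have "[:0,p1:] ^ m dvd [:0,1:] ^ m" by (rule dvd_power_same)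
    ultimately show "[:0,p1:] ^ m dvd coeff F b" using dvd_trans by blast
  qed
  then show ?thesis by (simp add: const_poly_pow const_poly_dvd_iff)
qed

lemma map_poly_add_pd:
  "map_poly (pderiv ^^ i) (P + Q) = map_poly (pderiv ^^ i) P + map_poly (pderiv ^^ i) (Q :: 'a::idom poly poly)"
  by (rule poly_eqI) (simp add: coeff_map_poly pd_funpow_add)

lemma lin_of_nat:
  "map_poly (pderiv ^^ i) ((pderiv ^^ j) (of_nat k * F)) = of_nat k * map_poly (pderiv ^^ i) ((pderiv ^^ j) (F :: 'a::idom poly poly))"
proof (induction k)
  case 0 then show ?case by simp
next
  case (Suc k)
  have "of_nat (Suc k) * F = F + of_nat k * F" by (simp add: algebra_simps)
  then show ?case using Suc by (simp add: pd_funpow_add map_poly_add_pd algebra_simps)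
qed

lemma map_poly_const: "f 0 = 0 \<Longrightarrow> map_poly f [:x:] = [:f x:]"
  by (simp add: map_poly_pCons)

lemma poch1: "pochhammer (Suc 0) k = (fact k :: nat)"
  by (simp add: pochhammer_fact)

lemma H_shape:
  assumes hom: "cox_homogeneous n A B g" and cd: "c + d = A"
  shows "(D_x ^^ c) ((D_y ^^ d) g) = [:[: of_nat (fact c * fact d) * coeff (coeff g d) c :]:]"
proof -
  have Dx: "(D_x ^^ c) = map_poly (pderiv ^^ c)"
    unfolding D_x_def by (rule ext, rule map_poly_funpow) simp
  have Dy: "(D_y ^^ d) = pderiv ^^ d" unfolding D_y_def by simp
  have f0: "(pderiv ^^ c) 0 = (0 :: complex poly poly poly)" by simp
  have E: "coeff (coeff ((D_x ^^ c) ((D_y ^^ d) g)) d') c' =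
      of_nat (pochhammer (Suc c') c) * (of_nat (pochhammer (Suc d') d) * coeff (coeff g (d' + d)) (c' + c))" for d' c'
    by (simp add: Dx Dy coeff_map_poly pd_coeff coeff_of_nat_mult)
  have Z: "coeff (coeff g d'') c'' = 0" if "c'' + d'' \<noteq> A" for d'' c''
  proof (rule poly_eqI)
    fix b show "coeff (coeff (coeff g d'') c'') b = coeff 0 b"
    proof (rule poly_eqI)
      fix a show "coeff (coeff (coeff (coeff g d'') c'') b) a = coeff (coeff 0 b) a"
        using hom that unfolding cox_homogeneous_def cox_coeff_def by auto
    qed
  qed
  show ?thesis
  proof (rule poly_eqI)
    fix d' show "coeff ((D_x ^^ c) ((D_y ^^ d) g)) d' = coeff [:[: of_nat (fact c * fact d) * coeff (coeff g d) c :]:] d'"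
    proof (rule poly_eqI)
      fix c'
      show "coeff (coeff ((D_x ^^ c) ((D_y ^^ d) g)) d') c' = coeff (coeff [:[: of_nat (fact c * fact d) * coeff (coeff g d) c :]:] d') c'"
      proof (cases "d' = 0 \<and> c' = 0")
        case True
        then show ?thesis by (simp add: E poch1 mult.assoc)
      next
        case False
        then have "c' + c + (d' + d) \<noteq> A" using cd by auto
        then show ?thesis using False by (auto simp: E Z coeff_pCons split: nat.splits)
      qed
    qed
  qed
qed

lemma eval_partial:
  assumes hom: "cox_homogeneous n A B g" and cd: "c + d = A" and p: "p = (p0, p1, px, py)"
  shows "cox_eval (cox_partial i j c d g) p =
     of_nat (fact c * fact d) * poly (poly (map_poly (pderiv ^^ i) ((pderiv ^^ j) (coeff (coeff g d) c))) [:p1:]) p0"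
proof -
  define F where "F = coeff (coeff g d) c"
  have Dt1: "(D_t1 ^^ j) = map_poly (map_poly (pderiv ^^ j))"
  proof -
    have "(D_t1 ^^ j) = map_poly (map_poly pderiv ^^ j)"
      unfolding D_t1_def by (rule ext, rule map_poly_funpow) simp
    also have "(map_poly pderiv ^^ j) = map_poly (pderiv ^^ j)"
      by (rule ext, rule map_poly_funpow) simp
    finally show ?thesis .
  qed
  have Dt0: "(D_t0 ^^ i) = map_poly (map_poly (map_poly (pderiv ^^ i)))"
  proof -
    have "(D_t0 ^^ i) = map_poly (map_poly (map_poly pderiv) ^^ i)"
      unfolding D_t0_def by (rule ext, rule map_poly_funpow) simp
    also have "(map_poly (map_poly pderiv) ^^ i) = map_poly (map_poly pderiv ^^ i)"
      by (rule ext, rule map_poly_funpow) simp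
    also have "(map_poly pderiv ^^ i) = map_poly (pderiv ^^ i)"
      by (rule ext, rule map_poly_funpow) simp
    finally show ?thesis .
  qed
  have "cox_partial i j c d g = [:[: map_poly (pderiv ^^ i) ((pderiv ^^ j) (of_nat (fact c * fact d) * F)) :]:]"
    unfolding cox_partial_def H_shape[OF hom cd] Dt1 Dt0 F_def
    by (simp add: map_poly_const del: of_nat_fact of_nat_mult)
  then show ?thesis
    by (simp add: cox_eval_def p lin_of_nat F_def del: of_nat_fact of_nat_mult)
qed

lemma map_poly_funpow0: "map_poly (f ^^ 0) p = p"
  by (simp add: map_poly_idI)

lemma cox_zero_coeff:
  assumes hom: "cox_homogeneous n A B g" and "c + d \<noteq> A"
  shows "coeff (coeff g d) c = 0"
proof (rule poly_eqI)
  fix b show "coeff (coeff (coeff g d) c) b = coeff 0 b"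
  proof (rule poly_eqI)
    fix a show "coeff (coeff (coeff (coeff g d) c) b) a = coeff (coeff 0 b) a"
      using assms unfolding cox_homogeneous_def cox_coeff_def by auto
  qed
qed

lemma curve_dvd:
  assumes hom: "cox_homogeneous n A B g" and AM: "A \<le> M" and pt: "hirz_point p"
    and ord: "ord_pt_ge g p (2 * M)" and p: "p = (p0, p1, px, py)"
  shows "[:[:[:[:0,p1:],[:-p0:]:]:]:] ^ M dvd g"
proof -
  let ?l = "[:[:0,p1:],[:-p0:]:]"
  have key: "?l ^ M dvd coeff (coeff g d) c" for d c
  proof (cases "c + d = A")
    case False
    then show ?thesis using cox_zero_coeff[OF hom] by simp
  next
    case True
    define F where "F = coeff (coeff g d) c"
    have hF: "homF F (B - n * d)" unfolding homF_def
    proof (intro allI impI)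
      fix a b assume "coeff (coeff F b) a \<noteq> 0"
      then have "cox_coeff g a b c d \<noteq> 0" by (simp add: F_def cox_coeff_def)
      then have "a + b + n * d = B" using hom by (simp add: cox_homogeneous_def)
      then show "a + b = B - n * d" by simp
    qed
    have ev: "poly (poly (map_poly (pderiv ^^ i) ((pderiv ^^ j) F)) [:p1:]) p0 = 0" if "i + j < M" for i j
    proof -
      have "i + j + c + d < 2 * M" using that True AM by simp
      then have "cox_eval (cox_partial i j c d g) p = 0" using ord by (simp add: ord_pt_ge_def)
      then have "(of_nat (fact c * fact d) :: complex) * poly (poly (map_poly (pderiv ^^ i) ((pderiv ^^ j) F)) [:p1:]) p0 = 0"
        using eval_partial[OF hom True p] by (simp add: F_def del: of_nat_fact of_nat_mult)
      moreover have "(of_nat (fact c * fact d) :: complex) \<noteq> 0"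
        by (metis of_nat_eq_0_iff mult_eq_0_iff fact_nonzero)
      ultimately show ?thesis by simp
    qed
    show ?thesis
    proof (cases "p0 = 0")
      case True
      then have p1: "p1 \<noteq> 0" using pt p by (simp add: hirz_point_def)
      have "\<forall>i<M. poly (poly (map_poly (pderiv ^^ i) F) [:p1:]) 0 = 0"
        using ev[where j=0] True by simp
      then have "[:[:0,p1:]:] ^ M dvd F" by (rule caseB[OF hF p1])
      then show ?thesis using True by (simp add: F_def)
    next
      case False
      have "\<forall>j<M. poly (poly ((pderiv ^^ j) F) [:p1:]) p0 = 0"
        using ev[where i=0] by (simp add: map_poly_funpow0)
      then show ?thesis unfolding F_def[symmetric] by (rule caseA[OF hF False])
    qed
  qed
  then have "[:?l ^ M:] dvd coeff g d" for d by (simp add: const_poly_dvd_iff)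
  then have "[:[:?l ^ M:]:] dvd g" by (simp add: const_poly_dvd_iff)
  then show ?thesis by (simp add: const_poly_pow)
qed

lemma irred_lin:
  fixes a b :: "'a::idom"
  assumes b: "b dvd 1"
  shows "irreducible [:a,b:]"
proof (rule irreducibleI)
  have b0: "b \<noteq> 0" using b by (metis dvd_0_left_iff zero_neq_one)
  show "[:a,b:] \<noteq> 0" using b0 by simp
  show "\<not> [:a,b:] dvd 1" using b0 by (auto simp: is_unit_poly_iff)
  fix x y assume xy: "[:a,b:] = x * y"
  then have x0: "x \<noteq> 0" and y0: "y \<noteq> 0" using b0 by auto
  have "degree [:a,b:] = degree x + degree y" using xy x0 y0 by (simp add: degree_mult_eq)
  then have "degree x = 0 \<or> degree y = 0" using b0 by auto
  then show "x dvd 1 \<or> y dvd 1"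
  proof
    assume "degree x = 0"
    then obtain u where u: "x = [:u:]" by (auto elim: degree_eq_zeroE)
    have "b = coeff [:a,b:] 1" by simp
    also have "\<dots> = u * coeff y 1" by (simp add: xy u)
    finally have "u dvd b" by simp
    then have "u dvd 1" using b by (rule dvd_trans)
    then show ?thesis using u by (simp add: is_unit_const_poly_iff)
  next
    assume "degree y = 0"
    then obtain u where u: "y = [:u:]" by (auto elim: degree_eq_zeroE)
    have "b = coeff [:a,b:] 1" by simp
    also have "\<dots> = coeff x 1 * u" by (simp add: xy u mult.commute)
    finally have "u dvd b" by simp
    then have "u dvd 1" using b by (rule dvd_trans)
    then show ?thesis using u by (simp add: is_unit_const_poly_iff)
  qed
qed

theorem mainTheorem8:
  fixes n :: nat and La Lb :: nat and \<phi> \<gamma> :: cox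
    and p :: "complex \<times> complex \<times> complex \<times> complex"
  assumes L: "(La, Lb) \<in> {(0, 2), (1, 2), (1, n + 2)}"
    and phi: "cox_homogeneous n (4 * La) (4 * Lb) \<phi>"
    and gam: "cox_homogeneous n (6 * La) (6 * Lb) \<gamma>"
    and pt: "hirz_point p"
    and o1: "ord_pt_ge \<phi> p 8"
    and o2: "ord_pt_ge \<gamma> p 12"
  shows "\<exists>C. irreducible_curve n C \<and> cox_eval C p = 0
             \<and> ord_curve_ge C \<phi> 4 \<and> ord_curve_ge C \<gamma> 6"
proof -
  obtain p0 p1 px py where p: "p = (p0, p1, px, py)" by (cases p) auto
  let ?l = "[:[:0,p1:],[:-p0:]:]"
  define C :: cox where "C = [:[:?l:]:]"
  have La: "La \<le> 1" using L by auto
  have irr_l: "irreducible ?l"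
  proof (cases "p0 = 0")
    case True
    then have p1: "p1 \<noteq> 0" using pt p by (simp add: hirz_point_def)
    have "irreducible [:0, p1:]" by (rule irreducible_linear_field_poly[OF p1])
    then show ?thesis using True by (simp add: irreducible_const_poly_iff)
  next
    case False
    have u: "[:-p0:] dvd 1" using False by (simp add: is_unit_const_poly_iff dvd_field_iff)
    then show ?thesis by (rule irred_lin)
  qed
  have "irreducible C" unfolding C_def using irr_l by (simp add: irreducible_const_poly_iff)
  moreover have "cox_homogeneous n 0 1 C"
    unfolding cox_homogeneous_def cox_coeff_def C_def
    by (auto simp: coeff_pCons split: nat.splits)
  moreover have "cox_eval C p = 0" by (simp add: C_def cox_eval_def p algebra_simps)
  moreover have "ord_curve_ge C \<phi> 4"
    unfolding ord_curve_ge_def C_def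
    by (rule curve_dvd[OF phi _ pt _ p]) (use La o1 in auto)
  moreover have "ord_curve_ge C \<gamma> 6"
    unfolding ord_curve_ge_def C_def
    by (rule curve_dvd[OF gam _ pt _ p]) (use La o2 in auto)
  ultimately show ?thesis unfolding irreducible_curve_def by blast
qed

end
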